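(* Let $p_1,p_2,p_3,p_4$ be the joints of a framework in $\mathbb{R}^2$ forming a non-degenerate rhombus, with bars $p_1p_2$, $p_2p_3$, $p_3p_4$, $p_4p_1$. If $g$ is any infinitesimal motion of this framework and $v_i=g(p_i)$ for $i=1,2,3,4$, then $v_1+v_3=v_2+v_4$.
   Context: A framework in $\mathbb{R}^d$ is a finite graph whose vertices (joints) are distinct points of $\mathbb{R}^d$ and whose edges (bars) are segments between pairs of joints. If $F$ is a framework with joint set $X$, an infinitesimal motion of $F$ is a map $g:X\to\mathbb{R}^d$ with $(g(x)-g(y))\cdot(x-y)=0$ for every bar $xy$ of $F$. Non-degenerate rhombus means $p_2-p_1=p_3-p_4$ and $p_3-p_2=p_4-p_1$, these two vectors are linearly independent, and all four sides have equal length. *)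

theory Defs
  imports "HOL-Analysis.Analysis"
begin

text \<open>A framework in R^d: joint set X (finite) and bar set E, a set of unordered
  pairs {x,y} of distinct joints.\<close>

definition infinitesimal_motion ::
  "('a::euclidean_space) set \<Rightarrow> 'a set set \<Rightarrow> ('a \<Rightarrow> 'a) \<Rightarrow> bool" where
  "infinitesimal_motion X E g \<longleftrightarrow>
     (\<forall>x\<in>X. \<forall>y\<in>X. {x, y} \<in> E \<longrightarrow> (g x - g y) \<bullet> (x - y) = 0)"

definition nondegenerate_rhombus :: "real^2 \<Rightarrow> real^2 \<Rightarrow> real^2 \<Rightarrow> real^2 \<Rightarrow> bool" where
  "nondegenerate_rhombus p1 p2 p3 p4 \<longleftrightarrow>
     p2 - p1 = p3 - p4 \<and> p3 - p2 = p4 - p1 \<and>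
     independent {p2 - p1, p3 - p2} \<and> p2 - p1 \<noteq> p3 - p2 \<and>
     norm (p2 - p1) = norm (p3 - p2) \<and> norm (p3 - p2) = norm (p4 - p3) \<and>
     norm (p4 - p3) = norm (p1 - p4)"

end

theory Submission
  imports Defs
begin

theorem lemma3:
  fixes p1 p2 p3 p4 :: "real^2" and g :: "real^2 \<Rightarrow> real^2"
  assumes "nondegenerate_rhombus p1 p2 p3 p4"
    and "infinitesimal_motion {p1, p2, p3, p4} {{p1, p2}, {p2, p3}, {p3, p4}, {p4, p1}} g"
  shows "g p1 + g p3 = g p2 + g p4"
proof -
  define a where "a = p2 - p1"
  define b where "b = p3 - p2"
  define w where "w = g p1 + g p3 - g p2 - g p4"
  have r: "p2 - p1 = p3 - p4" "p3 - p2 = p4 - p1" "independent {a, b}" "a \<noteq> b"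
    using assms(1) unfolding nondegenerate_rhombus_def a_def b_def by auto
  note r(1)[symmetric, simp] r(2)[symmetric, simp]
  have e1: "(g p1 - g p2) \<bullet> (p1 - p2) = 0"
    and e2: "(g p2 - g p3) \<bullet> (p2 - p3) = 0"
    and e3: "(g p3 - g p4) \<bullet> (p3 - p4) = 0"
    and e4: "(g p4 - g p1) \<bullet> (p4 - p1) = 0"
    using assms(2) unfolding infinitesimal_motion_def by auto
  have wa: "w \<bullet> a = 0"
  proof -
    have "w = (g p1 - g p2) + (g p3 - g p4)" unfolding w_def by simp
    moreover have "p1 - p2 = - a" "p3 - p4 = a" using r unfolding a_def by auto
    ultimately show ?thesis using e1 e3 by (simp add: inner_add_left)
  qed
  have wb: "w \<bullet> b = 0"
  proof -
    have "w = - (g p2 - g p3) - (g p4 - g p1)" unfolding w_def by simp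
    moreover have "p2 - p3 = - b" "p4 - p1 = b" using r unfolding b_def by auto
    ultimately show ?thesis using e2 e4 by (simp add: inner_diff_left)
  qed
  have "card {a, b} = 2" using r(4) by simp
  hence "(UNIV :: (real^2) set) \<subseteq> span {a, b}"
    using card_ge_dim_independent[of "{a,b}" UNIV] r(3) by simp
  hence "w \<in> span {a, b}" by auto
  hence "orthogonal w w"
    using orthogonal_to_span[of w "{a,b}" w] wa wb by (auto simp: orthogonal_def)
  hence "w = 0" by (simp add: orthogonal_def)
  thus ?thesis unfolding w_def by (simp add: algebra_simps)
qed

end
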